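(* Let $\varphi:\mathcal X\to\mathbb C^N$ be a feature map, $H$ a Hermitian $N\times N$ matrix, and $g(x)=\varphi(x)^*H\varphi(x)$. Then for every $Q\in\mathcal P(\mathcal X)$, \[L^{\mathrm{OPT}}_g(Q)=\sup_{\tilde Q\in\mathcal P(\mathcal X):\ \Sigma_{\tilde Q}=\Sigma_Q}L_g(\tilde Q).\]
   Context: $\mathcal X=[0,1]^d$; $\mathcal P(\mathcal X)$ is the set of probability measures on $\mathcal X$; $\varphi$ is assumed such that the integrals below exist (e.g. bounded measurable). For $Q\in\mathcal P(\mathcal X)$, $L_g(Q)=\log\int_{\mathcal X}e^{g(x)}\,dQ(x)$ and $\Sigma_Q=\int_{\mathcal X}\varphi(x)\varphi(x)^*\,dQ(x)$. With $D_{\mathrm{KL}}(P\|Q)=\int\log(dP/dQ)\,dP$, define $D^{\mathrm{OPT}}_{\mathrm{KL}}(\Sigma_P\|\Sigma_Q)=\inf\{D_{\mathrm{KL}}(\tilde P\|\tilde Q):\tilde P,\tilde Q\in\mathcal P(\mathcal X),\ \Sigma_{\tilde P}=\Sigma_P,\ \Sigma_{\tilde Q}=\Sigma_Q\}$ and $L^{\mathrm{OPT}}_g(Q)=\sup_{P\in\mathcal P(\mathcal X)}\big(\int_{\mathcal X}g\,dP-D^{\mathrm{OPT}}_{\mathrm{KL}}(\Sigma_P\|\Sigma_Q)\big)$. *)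

theory Defs
  imports "HOL-Probability.Probability"
begin

text \<open>The domain X = [0,1]^d, with d given by the finite index type 'd.\<close>
definition cube :: "(real^'d) set" where
  "cube = {x. \<forall>i. 0 \<le> x $ i \<and> x $ i \<le> 1}"

definition cube_space :: "(real^'d) measure" where
  "cube_space = restrict_space borel cube"

definition probs :: "(real^'d) measure set" where
  "probs = {M. sets M = sets cube_space \<and> prob_space M}"

text \<open>KL divergence D_KL(P||Q) = int log(dP/dQ) dP, +infinity if P is not
  absolutely continuous w.r.t. Q (or if the integral diverges to +infinity;
  the negative part is always P-integrable).\<close>
definition KL :: "'a measure \<Rightarrow> 'a measure \<Rightarrow> ereal" where
  "KL P Q =
     (if absolutely_continuous Q P \<and>
         integrable P (\<lambda>x. ln (enn2real (RN_deriv Q P x)))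
      then ereal (\<integral>x. ln (enn2real (RN_deriv Q P x)) \<partial>P)
      else \<infinity>)"

definition Sigma :: "('a \<Rightarrow> complex^'n) \<Rightarrow> 'a measure \<Rightarrow> complex^'n^'n" where
  "Sigma \<phi> Q = (\<chi> i j. \<integral>x. \<phi> x $ i * cnj (\<phi> x $ j) \<partial>Q)"

definition Lg :: "('a \<Rightarrow> real) \<Rightarrow> 'a measure \<Rightarrow> real" where
  "Lg g Q = ln (\<integral>x. exp (g x) \<partial>Q)"

definition KL_opt :: "(real^'d::finite \<Rightarrow> complex^'n::finite) \<Rightarrow> (real^'d) measure \<Rightarrow> (real^'d) measure \<Rightarrow> ereal" where
  "KL_opt \<phi> P Q = (INF PQ \<in> {(P', Q'). P' \<in> probs \<and> Q' \<in> probs \<and>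
       Sigma \<phi> P' = Sigma \<phi> P \<and> Sigma \<phi> Q' = Sigma \<phi> Q}. KL (fst PQ) (snd PQ))"

definition L_opt :: "(real^'d::finite \<Rightarrow> complex^'n::finite) \<Rightarrow> (real^'d \<Rightarrow> real) \<Rightarrow> (real^'d) measure \<Rightarrow> ereal" where
  "L_opt \<phi> g Q = (SUP P \<in> probs. ereal (\<integral>x. g x \<partial>P) - KL_opt \<phi> P Q)"

definition hermitian :: "complex^'n^'n \<Rightarrow> bool" where
  "hermitian H \<longleftrightarrow> (\<forall>i j. H $ i $ j = cnj (H $ j $ i))"

definition quad :: "complex^'n^'n \<Rightarrow> complex^'n \<Rightarrow> complex" where
  "quad H v = (\<Sum>i\<in>UNIV. \<Sum>j\<in>UNIV. cnj (v $ i) * H $ i $ j * v $ j)"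

end

theory Submission
  imports Defs
begin

lemma space_cube_space: "space cube_space = cube"
  by (simp add: cube_space_def space_restrict_space)

lemma probsD:
  assumes "M \<in> probs"
  shows "prob_space M" "sets M = sets cube_space" "space M = cube"
  using assms sets_eq_imp_space_eq[of M cube_space]
  by (auto simp: probs_def space_cube_space)

lemma meas_probs:
  assumes "f \<in> borel_measurable cube_space" "M \<in> probs"
  shows "f \<in> borel_measurable M"
  using assms(1) measurable_cong_sets[OF probsD(2)[OF assms(2)] refl] by blast

lemma meas_comp:
  assumes "\<phi> \<in> borel_measurable M"
  shows "(\<lambda>x. (\<phi> x :: complex^'n) $ i) \<in> borel_measurable M"
  by (rule borel_measurable_continuous_on[OF continuous_on_component[OF continuous_on_id] assms])

lemma meas_prod:
  assumes "\<phi> \<in> borel_measurable M"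
  shows "(\<lambda>x. (\<phi> x :: complex^'n) $ i * cnj (\<phi> x $ j)) \<in> borel_measurable M"
proof -
  have "(\<lambda>x. cnj (\<phi> x $ j)) \<in> borel_measurable M"
    by (rule borel_measurable_continuous_on[OF continuous_on_cnj[OF continuous_on_id] meas_comp[OF assms]])
  then show ?thesis using meas_comp[OF assms, of i] by measurable
qed

lemma quad_eq:
  "quad H v = (\<Sum>i\<in>UNIV. \<Sum>j\<in>UNIV. H $ i $ j * (v $ j * cnj (v $ i)))"
  unfolding quad_def by (intro sum.cong refl) (simp add: algebra_simps)

lemma quad_bound:
  assumes "norm v \<le> C"
  shows "norm (quad H v) \<le> (\<Sum>i\<in>UNIV. \<Sum>j\<in>UNIV. norm (H $ i $ j) * (C * C))"
proof -
  have *: "norm (H $ i $ j * (v $ j * cnj (v $ i))) \<le> norm (H $ i $ j) * (C * C)" for i j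
  proof -
  have "norm (v $ j) \<le> norm v" by (rule Finite_Cartesian_Product.norm_nth_le)
  moreover have "norm (v $ i) \<le> norm v" by (rule Finite_Cartesian_Product.norm_nth_le)
  ultimately have a: "norm (v $ j) \<le> C" and b: "norm (v $ i) \<le> C" using assms by linarith+
  have "norm (v $ j) * norm (v $ i) \<le> C * C"
    by (rule mult_mono[OF a b]) (auto intro: order.trans[OF norm_ge_zero a])
  then have "norm (H $ i $ j) * (norm (v $ j) * norm (v $ i)) \<le> norm (H $ i $ j) * (C * C)"
    by (rule mult_left_mono) simp
  then show "norm (H $ i $ j * (v $ j * cnj (v $ i))) \<le> norm (H $ i $ j) * (C * C)"
    by (simp add: norm_mult)
  qed
  have "norm (\<Sum>i\<in>UNIV. \<Sum>j\<in>UNIV. H $ i $ j * (v $ j * cnj (v $ i)))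
     \<le> (\<Sum>i\<in>UNIV. norm (\<Sum>j\<in>UNIV. H $ i $ j * (v $ j * cnj (v $ i))))" by (rule norm_sum)
  also have "\<dots> \<le> (\<Sum>i\<in>UNIV. \<Sum>j\<in>UNIV. norm (H $ i $ j) * (C * C))"
    by (intro sum_mono order.trans[OF norm_sum]) (simp add: *)
  finally show ?thesis by (simp only: quad_eq)
qed
locale setting =
  fixes \<phi> :: "real^'d::finite \<Rightarrow> complex^'n::finite"
    and H :: "complex^'n^'n"
    and g :: "real^'d \<Rightarrow> real"
  assumes phi_meas: "\<phi> \<in> borel_measurable cube_space"
    and phi_bdd: "bounded (\<phi> ` cube)"
    and g_def: "\<And>x. g x = Re (quad H (\<phi> x))"
begin

definition "C = (SOME C. \<forall>x\<in>cube. norm (\<phi> x) \<le> C)"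
definition "B = (\<Sum>i\<in>UNIV. \<Sum>j\<in>UNIV. norm (H $ i $ j) * (C * C))"

lemma C_bound: "x \<in> cube \<Longrightarrow> norm (\<phi> x) \<le> C"
proof -
  have "\<exists>C. \<forall>x\<in>cube. norm (\<phi> x) \<le> C" using phi_bdd by (auto simp: bounded_iff)
  then have "\<forall>x\<in>cube. norm (\<phi> x) \<le> C" unfolding C_def by (rule someI_ex)
  then show "x \<in> cube \<Longrightarrow> norm (\<phi> x) \<le> C" by blast
qed

lemma g_bound: "x \<in> cube \<Longrightarrow> \<bar>g x\<bar> \<le> B"
proof -
  assume x: "x \<in> cube"
  have "\<bar>g x\<bar> \<le> norm (quad H (\<phi> x))" unfolding g_def by (rule abs_Re_le_cmod)
  also have "\<dots> \<le> B" unfolding B_def by (rule quad_bound[OF C_bound[OF x]])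
  finally show ?thesis .
qed

lemma g_eq: "g x = Re (\<Sum>i\<in>UNIV. \<Sum>j\<in>UNIV. H $ i $ j * (\<phi> x $ j * cnj (\<phi> x $ i)))"
  by (simp add: g_def quad_eq)

lemma g_meas: "g \<in> borel_measurable cube_space"
proof -
  have "(\<lambda>x. Re (\<Sum>i\<in>UNIV. \<Sum>j\<in>UNIV. H $ i $ j * (\<phi> x $ j * cnj (\<phi> x $ i)))) \<in> borel_measurable cube_space"
    using meas_prod[OF phi_meas] by measurable
  then show ?thesis by (simp add: g_eq[abs_def])
qed

context
  fixes M :: "(real^'d) measure" assumes M: "M \<in> probs"
begin

interpretation M: prob_space M using probsD[OF M] by simp

lemma gM: "g \<in> borel_measurable M" using meas_probs[OF g_meas M] .

lemma int_g: "integrable M g"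
  by (rule M.integrable_const_bound[where B=B]) (use g_bound probsD(3)[OF M] gM in auto)

lemma int_expg: "integrable M (\<lambda>x. exp (g x))"
proof (rule M.integrable_const_bound[where B="exp B"])
  show "AE x in M. norm (exp (g x)) \<le> exp B"
    using g_bound probsD(3)[OF M] by (auto intro!: AE_I2 simp: abs_le_iff)
qed (use gM in measurable)

lemma Z_pos: "0 < (\<integral>x. exp (g x) \<partial>M)"
proof -
  have lb: "exp (- B) \<le> exp (g x)" if "x \<in> space M" for x
    using g_bound[of x] probsD(3)[OF M] that by auto
  have "(\<integral>x. exp (- B) \<partial>M) \<le> (\<integral>x. exp (g x) \<partial>M)"
    by (rule integral_mono_AE) (use int_expg lb in \<open>auto intro!: AE_I2\<close>)
  then have "exp (- B) \<le> (\<integral>x. exp (g x) \<partial>M)" using M.prob_space by simp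
  then show ?thesis using exp_gt_zero[of "-B"] by linarith
qed

lemma int_prod: "integrable M (\<lambda>x. \<phi> x $ j * cnj (\<phi> x $ i))"
proof (rule M.integrable_const_bound[where B="C * C"])
  show "AE x in M. norm (\<phi> x $ j * cnj (\<phi> x $ i)) \<le> C * C"
  proof (intro AE_I2)
    fix x assume "x \<in> space M"
    then have "norm (\<phi> x) \<le> C" using C_bound probsD(3)[OF M] by auto
    moreover have "norm (\<phi> x $ j) \<le> norm (\<phi> x)" by (rule Finite_Cartesian_Product.norm_nth_le)
    moreover have "norm (\<phi> x $ i) \<le> norm (\<phi> x)" by (rule Finite_Cartesian_Product.norm_nth_le)
    ultimately have a: "norm (\<phi> x $ j) \<le> C" and b: "norm (\<phi> x $ i) \<le> C" by linarith+
    have "norm (\<phi> x $ j) * norm (\<phi> x $ i) \<le> C * C"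
      by (rule mult_mono[OF a b]) (auto intro: order.trans[OF norm_ge_zero a])
    then show "norm (\<phi> x $ j * cnj (\<phi> x $ i)) \<le> C * C"
      by (simp add: norm_mult)
  qed
qed (rule meas_prod[OF meas_probs[OF phi_meas M]])

lemma G_Sigma: "(\<integral>x. g x \<partial>M) = Re (\<Sum>i\<in>UNIV. \<Sum>j\<in>UNIV. H $ i $ j * Sigma \<phi> M $ j $ i)"
proof -
  have "(\<integral>x. g x \<partial>M) = Re (\<integral>x. (\<Sum>i\<in>UNIV. \<Sum>j\<in>UNIV. H $ i $ j * (\<phi> x $ j * cnj (\<phi> x $ i))) \<partial>M)"
    unfolding g_eq using int_prod by (intro integral_Re) auto
  also have "\<dots> = Re (\<Sum>i\<in>UNIV. \<Sum>j\<in>UNIV. H $ i $ j * Sigma \<phi> M $ j $ i)"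
    using int_prod by (simp add: Sigma_def integral_sum)
  finally show ?thesis .
qed

end

lemma DV1:
  assumes P: "P \<in> probs" and Q: "Q \<in> probs"
  shows "ereal (\<integral>x. g x \<partial>P) - KL P Q \<le> ereal (Lg g Q)"
proof (cases "absolutely_continuous Q P \<and> integrable P (\<lambda>x. ln (enn2real (RN_deriv Q P x)))")
  case False
  then have "KL P Q = \<infinity>" unfolding KL_def by (rule if_not_P)
  then show ?thesis by simp
next
  case True
  then have ac: "absolutely_continuous Q P" and inth: "integrable P (\<lambda>x. ln (enn2real (RN_deriv Q P x)))"
    by blast+
  interpret Qp: prob_space Q using probsD[OF Q] by simp
  interpret Pp: prob_space P using probsD[OF P] by simp
  have sPQ: "sets P = sets Q" using probsD(2)[OF P] probsD(2)[OF Q] by simp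
  define f where "f = RN_deriv Q P"
  define h where "h x = ln (enn2real (f x))" for x
  define Z where "Z = (\<integral>x. exp (g x) \<partial>Q)"
  define u where "u x = g x - h x - ln Z" for x
  have Zp: "0 < Z" unfolding Z_def by (rule Z_pos[OF Q])
  have fQ: "f \<in> borel_measurable Q" unfolding f_def by (rule borel_measurable_RN_deriv)
  have fP: "f \<in> borel_measurable P" using fQ measurable_cong_sets[OF sPQ refl] by blast
  have gQ: "g \<in> borel_measurable Q" by (rule gM[OF Q])
  have gP: "g \<in> borel_measurable P" by (rule gM[OF P])
  have uQ: "u \<in> borel_measurable Q" unfolding u_def h_def using fQ gQ by measurable
  have uP: "u \<in> borel_measurable P" unfolding u_def h_def using fP gP by measurable
  have fin: "AE x in Q. f x \<noteq> \<infinity>"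
    unfolding f_def by (rule Qp.RN_deriv_finite[OF Pp.sigma_finite_measure_axioms ac sPQ])
  have pw: "f x * ennreal (exp (u x)) \<le> ennreal (exp (g x) / Z)" if fx: "f x \<noteq> \<infinity>" for x
  proof -
    obtain r where r: "f x = ennreal r" "0 \<le> r" using fx by (cases "f x") auto
    show ?thesis
    proof (cases "r = 0")
      case True then show ?thesis using r by simp
    next
      case False
      then have rp: "0 < r" using r by simp
      have hx: "h x = ln r" unfolding h_def using r by simp
      have "r * exp (u x) = exp (g x) / Z"
        unfolding u_def hx using rp Zp by (simp add: exp_diff)
      then show ?thesis using r by (simp add: ennreal_mult'[symmetric])
    qed
  qed
  have "(\<integral>\<^sup>+x. ennreal (exp (u x)) \<partial>P) = (\<integral>\<^sup>+x. f x * ennreal (exp (u x)) \<partial>Q)"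
    unfolding f_def by (rule Qp.RN_deriv_nn_integral[OF ac sPQ]) (use uQ in measurable)
  also have "\<dots> \<le> (\<integral>\<^sup>+x. ennreal (exp (g x) / Z) \<partial>Q)"
    by (rule nn_integral_mono_AE) (use fin pw in auto)
  also have "\<dots> = ennreal (\<integral>x. exp (g x) / Z \<partial>Q)"
    by (rule nn_integral_eq_integral) (use int_expg[OF Q] Zp in \<open>auto intro!: AE_I2\<close>)
  also have "\<dots> = 1" using Zp by (simp add: Z_def)
  finally have nnle: "(\<integral>\<^sup>+x. ennreal (exp (u x)) \<partial>P) \<le> 1" .
  have intv: "integrable P (\<lambda>x. exp (u x))"
    by (rule integrableI_nonneg) (use uP nnle in \<open>auto simp: order.strict_trans1\<close>)
  have eqv: "ennreal (\<integral>x. exp (u x) \<partial>P) = (\<integral>\<^sup>+x. ennreal (exp (u x)) \<partial>P)"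
    by (rule nn_integral_eq_integral[symmetric]) (use intv in auto)
  have "ennreal (\<integral>x. exp (u x) \<partial>P) \<le> 1" unfolding eqv by (rule nnle)
  then have vle: "(\<integral>x. exp (u x) \<partial>P) \<le> 1" by (rule ennreal_le_1[THEN iffD1])
  have inth': "integrable P h" using inth unfolding h_def f_def .
  have intu: "integrable P u" unfolding u_def using int_g[OF P] inth' by auto
  have "(\<integral>x. u x \<partial>P) \<le> (\<integral>x. exp (u x) - 1 \<partial>P)"
    by (rule integral_mono) (use intu intv exp_ge_add_one_self in \<open>auto intro: integrable_diff simp del: exp_ge_add_one_self\<close>, smt (verit) exp_ge_add_one_self)
  also have "\<dots> = (\<integral>x. exp (u x) \<partial>P) - 1" using intv Pp.prob_space by simp
  finally have "(\<integral>x. u x \<partial>P) \<le> 0" using vle by simp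
  moreover have "(\<integral>x. u x \<partial>P) = (\<integral>x. g x \<partial>P) - (\<integral>x. h x \<partial>P) - ln Z"
    unfolding u_def using int_g[OF P] inth' Pp.prob_space by simp
  ultimately have "(\<integral>x. g x \<partial>P) - (\<integral>x. h x \<partial>P) \<le> ln Z" by simp
  then show ?thesis using True
    by (simp add: KL_def Lg_def Z_def h_def f_def)
qed


lemma DV2:
  assumes Q: "Q \<in> probs"
  shows "\<exists>P\<in>probs. KL P Q = ereal ((\<integral>x. g x \<partial>P) - Lg g Q)"
proof -
  interpret Qp: prob_space Q using probsD[OF Q] by simp
  define Z where "Z = (\<integral>x. exp (g x) \<partial>Q)"
  define d where "d x = exp (g x) / Z" for x
  have Zp: "0 < Z" unfolding Z_def by (rule Z_pos[OF Q])
  have gQ: "g \<in> borel_measurable Q" by (rule gM[OF Q])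
  have dQ: "(\<lambda>x. ennreal (d x)) \<in> borel_measurable Q" unfolding d_def using gQ by measurable
  define P where "P = density Q (\<lambda>x. ennreal (d x))"
  have sP: "sets P = sets Q" unfolding P_def by simp
  have spP: "space P = space Q" unfolding P_def by simp
  have "emeasure P (space P) = (\<integral>\<^sup>+x. ennreal (d x) * indicator (space Q) x \<partial>Q)"
    unfolding spP unfolding P_def by (rule emeasure_density[OF dQ sets.top])
  also have "\<dots> = (\<integral>\<^sup>+x. ennreal (d x) \<partial>Q)"
    by (rule nn_integral_cong) simp
  also have "\<dots> = ennreal (\<integral>x. d x \<partial>Q)"
    by (rule nn_integral_eq_integral) (use int_expg[OF Q] Zp in \<open>auto intro!: AE_I2 simp: d_def\<close>)
  also have "\<dots> = 1" using Zp by (simp add: Z_def d_def)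
  finally have "prob_space P" by (intro prob_spaceI)
  then have Pp: "P \<in> probs" using sP probsD(2)[OF Q] by (simp add: probs_def)
  interpret Ppr: prob_space P by fact
  have ac: "absolutely_continuous Q P" unfolding P_def by (rule absolutely_continuousI_density[OF dQ])
  have AEd: "AE x in Q. ennreal (d x) = RN_deriv Q P x"
    by (rule Qp.RN_deriv_unique[OF dQ]) (simp add: P_def)
  have "AE x in Q. g x - ln Z = ln (enn2real (RN_deriv Q P x))"
    using AEd
  proof eventually_elim
    case (elim x)
    have "enn2real (RN_deriv Q P x) = d x" using elim[symmetric] Zp by (simp add: d_def)
    then show ?case using Zp by (simp add: d_def ln_divide_pos)
  qed
  then have AEP: "AE x in P. g x - ln Z = ln (enn2real (RN_deriv Q P x))"
    by (rule absolutely_continuous_AE[OF sP ac])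
  have m1: "(\<lambda>x. g x - ln Z) \<in> borel_measurable P" using gM[OF Pp] by measurable
  have "RN_deriv Q P \<in> borel_measurable Q" by (rule borel_measurable_RN_deriv)
  then have "RN_deriv Q P \<in> borel_measurable P" using measurable_cong_sets[OF sP refl] by blast
  then have m2: "(\<lambda>x. ln (enn2real (RN_deriv Q P x))) \<in> borel_measurable P" by measurable
  have i1: "integrable P (\<lambda>x. g x - ln Z)" using int_g[OF Pp] by auto
  have inth: "integrable P (\<lambda>x. ln (enn2real (RN_deriv Q P x)))"
    by (rule integrable_cong_AE_imp[OF i1 m2 AEP])
  have "(\<integral>x. ln (enn2real (RN_deriv Q P x)) \<partial>P) = (\<integral>x. g x - ln Z \<partial>P)"
    by (rule integral_cong_AE[OF m2 m1]) (use AEP in \<open>auto elim: AE_mp\<close>)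
  also have "\<dots> = (\<integral>x. g x \<partial>P) - ln Z" using int_g[OF Pp] Ppr.prob_space by simp
  finally have "KL P Q = ereal ((\<integral>x. g x \<partial>P) - ln Z)"
    unfolding KL_def using ac inth by simp
  then show ?thesis using Pp by (auto simp: Lg_def Z_def)
qed

end

theorem lemma22:
  fixes \<phi> :: "real^'d::finite \<Rightarrow> complex^'n::finite"
    and H :: "complex^'n^'n"
    and g :: "real^'d \<Rightarrow> real"
    and Q :: "(real^'d) measure"
  assumes phi_meas: "\<phi> \<in> borel_measurable cube_space"
    and phi_bdd: "bounded (\<phi> ` cube)"
    and herm: "hermitian H"
    and g_def: "\<And>x. g x = Re (quad H (\<phi> x))"
    and Q: "Q \<in> probs"
  shows "L_opt \<phi> g Q = (SUP Q' \<in> {Q' \<in> probs. Sigma \<phi> Q' = Sigma \<phi> Q}. ereal (Lg g Q'))"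
proof -
  interpret S: setting \<phi> H g by (rule setting.intro[OF phi_meas phi_bdd g_def])
  define T where "T P = {(P', Q'). P' \<in> probs \<and> Q' \<in> probs \<and>
       Sigma \<phi> P' = Sigma \<phi> P \<and> Sigma \<phi> Q' = Sigma \<phi> Q}" for P
  define R where "R = (SUP Q' \<in> {Q' \<in> probs. Sigma \<phi> Q' = Sigma \<phi> Q}. ereal (Lg g Q'))"
  have KLo: "KL_opt \<phi> P Q = (INF PQ \<in> T P. KL (fst PQ) (snd PQ))" for P :: "(real^'d) measure"
    unfolding KL_opt_def T_def ..
  have Geq: "(\<integral>x. g x \<partial>P') = (\<integral>x. g x \<partial>P)"
    if "P \<in> probs" "P' \<in> probs" "Sigma \<phi> P' = Sigma \<phi> P" for P P' :: "(real^'d) measure"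
    using S.G_Sigma[OF that(1)] S.G_Sigma[OF that(2)] that(3) by simp
  show ?thesis unfolding L_opt_def R_def[symmetric]
  proof (rule antisym)
    show "(SUP P\<in>probs. ereal (\<integral>x. g x \<partial>P) - KL_opt \<phi> P Q) \<le> R"
    proof (rule SUP_least)
      fix P :: "(real^'d) measure" assume P: "P \<in> probs"
      have ne: "T P \<noteq> {}" using P Q unfolding T_def by auto
      have "ereal (\<integral>x. g x \<partial>P) - KL_opt \<phi> P Q
          = (SUP PQ \<in> T P. ereal (\<integral>x. g x \<partial>P) - KL (fst PQ) (snd PQ))"
        unfolding KLo by (rule SUP_ereal_minus_right[OF ne, symmetric]) simp
      also have "\<dots> \<le> R"
      proof (rule SUP_least)
        fix PQ assume "PQ \<in> T P"
        then obtain P' Q' where PQ: "PQ = (P', Q')" "P' \<in> probs" "Q' \<in> probs"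
          "Sigma \<phi> P' = Sigma \<phi> P" "Sigma \<phi> Q' = Sigma \<phi> Q"
          unfolding T_def by auto
        have "ereal (\<integral>x. g x \<partial>P) - KL (fst PQ) (snd PQ) = ereal (\<integral>x. g x \<partial>P') - KL P' Q'"
          using Geq[OF P PQ(2,4)] PQ(1) by simp
        also have "\<dots> \<le> ereal (Lg g Q')" by (rule S.DV1[OF PQ(2,3)])
        also have "\<dots> \<le> R" unfolding R_def by (rule SUP_upper) (use PQ in auto)
        finally show "ereal (\<integral>x. g x \<partial>P) - KL (fst PQ) (snd PQ) \<le> R" .
      qed
      finally show "ereal (\<integral>x. g x \<partial>P) - KL_opt \<phi> P Q \<le> R" .
    qed
  next
    show "R \<le> (SUP P\<in>probs. ereal (\<integral>x. g x \<partial>P) - KL_opt \<phi> P Q)"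
      unfolding R_def
    proof (rule SUP_least)
      fix Q' assume "Q' \<in> {Q' \<in> probs. Sigma \<phi> Q' = Sigma \<phi> Q}"
      then have Q': "Q' \<in> probs" "Sigma \<phi> Q' = Sigma \<phi> Q" by auto
      obtain P where P: "P \<in> probs" and KLP: "KL P Q' = ereal ((\<integral>x. g x \<partial>P) - Lg g Q')"
        using S.DV2[OF Q'(1)] by blast
      have "ereal (Lg g Q') = ereal (\<integral>x. g x \<partial>P) - KL P Q'" using KLP by simp
      also have "\<dots> \<le> ereal (\<integral>x. g x \<partial>P) - KL_opt \<phi> P Q"
      proof (rule ereal_minus_mono)
        have "(P, Q') \<in> T P" using P Q' unfolding T_def by auto
        then have "(INF PQ \<in> T P. KL (fst PQ) (snd PQ)) \<le> KL (fst (P, Q')) (snd (P, Q'))"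
          by (rule INF_lower)
        then show "KL_opt \<phi> P Q \<le> KL P Q'" unfolding KLo by simp
      qed simp
      also have "\<dots> \<le> (SUP P\<in>probs. ereal (\<integral>x. g x \<partial>P) - KL_opt \<phi> P Q)"
        by (rule SUP_upper[OF P])
      finally show "ereal (Lg g Q') \<le> (SUP P\<in>probs. ereal (\<integral>x. g x \<partial>P) - KL_opt \<phi> P Q)" .
    qed
  qed
qed

end
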